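(* For every integer $k\ge2$, $$\max_{n\ge1}\frac{\log\tau_k(n)}{n}=\frac{\log k}{2}.$$
   Context: $\tau_k(n)$ is the number of ordered $k$-tuples of positive integers $(d_1,\dots,d_k)$ with $d_1\cdots d_k=n$. *)

theory Defs
  imports Complex_Main
begin

definition tau :: "nat \<Rightarrow> nat \<Rightarrow> nat" where
  "tau k n = card {ds :: nat list. length ds = k \<and> (\<forall>d\<in>set ds. d > 0) \<and> prod_list ds = n}"

end

theory Submission
  imports Defs "HOL-Computational_Algebra.Primes"
begin

definition TS :: "nat \<Rightarrow> nat \<Rightarrow> nat list set" where
  "TS k n = {ds :: nat list. length ds = k \<and> (\<forall>d\<in>set ds. d > 0) \<and> prod_list ds = n}"

lemma tau_TS: "tau k n = card (TS k n)" by (simp add: tau_def TS_def)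

lemma prime_dvd_prod_list_ex:
  fixes p :: nat
  assumes "prime p" "p dvd prod_list xs"
  shows "\<exists>i<length xs. p dvd xs ! i"
  using assms(2)
proof (induction xs)
  case Nil
  then show ?case using assms(1) by (simp add: not_prime_unit)
next
  case (Cons a xs)
  show ?case
  proof (cases "p dvd a")
    case True then show ?thesis by force
  next
    case False
    with Cons.prems assms(1) have "p dvd prod_list xs" by (simp add: prime_dvd_mult_iff)
    with Cons.IH obtain i where "i < length xs" "p dvd xs ! i" by blast
    then show ?thesis by (intro exI[of _ "Suc i"]) simp
  qed
qed

lemma TS_finite: "n \<ge> 1 \<Longrightarrow> finite (TS k n)"
proof -
  assume n: "n \<ge> 1"
  have "TS k n \<subseteq> {xs. set xs \<subseteq> {..n} \<and> length xs = k}"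
  proof
    fix ds assume "ds \<in> TS k n"
    then have "length ds = k" "prod_list ds = n" by (auto simp: TS_def)
    moreover have "\<forall>d\<in>set ds. d \<le> n"
      using prod_list_dvd[of _ ds] n \<open>prod_list ds = n\<close> by (metis dvd_imp_le not_one_le_zero neq0_conv)
    ultimately show "ds \<in> {xs. set xs \<subseteq> {..n} \<and> length xs = k}" by auto
  qed
  then show ?thesis using finite_subset finite_lists_length_eq[of "{..n}" k] by blast
qed

lemma prod_list_upd:
  fixes xs :: "nat list"
  assumes "i < length xs"
  shows "prod_list xs = xs ! i * prod_list (take i xs @ drop (Suc i) xs)"
        "prod_list (xs[i := a]) = a * prod_list (take i xs @ drop (Suc i) xs)"
proof -
  have "xs = take i xs @ xs ! i # drop (Suc i) xs" using assms by (simp add: id_take_nth_drop)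
  then have "prod_list xs = prod_list (take i xs) * (xs ! i * prod_list (drop (Suc i) xs))"
    by (metis prod_list.Cons prod_list.append)
  then show "prod_list xs = xs ! i * prod_list (take i xs @ drop (Suc i) xs)" by simp
  show "prod_list (xs[i := a]) = a * prod_list (take i xs @ drop (Suc i) xs)"
    using assms by (simp add: upd_conv_take_nth_drop)
qed

lemma tau_step:
  fixes p q k :: nat
  assumes p: "prime p" and q: "q \<ge> 1"
  shows "card (TS k (p * q)) \<le> k * card (TS k q)"
proof -
  define idx where "idx ds = (LEAST i. i < length ds \<and> p dvd ds ! i)" for ds :: "nat list"
  define g where "g ds = (idx ds, (ds[idx ds := ds ! idx ds div p]))" for ds
  have idxP: "idx ds < length ds \<and> p dvd ds ! idx ds" if "ds \<in> TS k (p*q)" for ds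
  proof -
    from that have "p dvd prod_list ds" by (simp add: TS_def)
    then have "\<exists>i. i < length ds \<and> p dvd ds ! i" using prime_dvd_prod_list_ex[OF p] by blast
    then show ?thesis unfolding idx_def by (rule LeastI_ex)
  qed
  have pp: "p > 0" using p prime_gt_0_nat by blast
  have inj: "inj_on g (TS k (p*q))"
  proof (rule inj_onI)
    fix ds es assume d: "ds \<in> TS k (p*q)" and e: "es \<in> TS k (p*q)" and eq: "g ds = g es"
    let ?i = "idx ds"
    have ie: "idx es = ?i" using eq by (simp add: g_def)
    have upd: "ds[?i := ds ! ?i div p] = es[?i := es ! ?i div p]" using eq ie by (simp add: g_def)
    have len: "length ds = length es" using d e by (simp add: TS_def)
    have di: "?i < length ds" "p dvd ds ! ?i" using idxP[OF d] by auto
    have ei: "p dvd es ! ?i" using idxP[OF e] ie by auto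
    have "ds[?i := ds ! ?i div p] ! ?i = es[?i := es ! ?i div p] ! ?i" using upd by simp
    then have "ds ! ?i div p = es ! ?i div p" using di len by simp
    then have at: "ds ! ?i = es ! ?i" using di(2) ei by (metis dvd_div_mult_self)
    show "ds = es"
    proof (rule nth_equalityI)
      show "length ds = length es" by (rule len)
      fix j assume j: "j < length ds"
      show "ds ! j = es ! j"
      proof (cases "j = ?i")
        case True then show ?thesis using at by simp
      next
        case False
        have "ds[?i := ds ! ?i div p] ! j = es[?i := es ! ?i div p] ! j" using upd by simp
        then show ?thesis using False by simp
      qed
    qed
  qed
  have img: "g ` TS k (p*q) \<subseteq> {..<k} \<times> TS k q"
  proof
    fix y assume "y \<in> g ` TS k (p*q)"
    then obtain ds where d: "ds \<in> TS k (p*q)" and y: "y = g ds" by blast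
    let ?i = "idx ds"
    have di: "?i < length ds" "p dvd ds ! ?i" using idxP[OF d] by auto
    have len: "length ds = k" and pos: "\<forall>x\<in>set ds. x > 0" and pr: "prod_list ds = p*q"
      using d by (auto simp: TS_def)
    have dpos: "ds ! ?i > 0" using pos di(1) by simp
    have "ds ! ?i div p > 0" using dpos di(2) pp by (auto elim!: dvdE)
    then have pos2: "\<forall>x\<in>set (ds[?i := ds ! ?i div p]). x > 0" using pos
      by (auto dest: set_update_subset_insert[THEN subsetD])
    have "p * q = ds ! ?i * prod_list (take ?i ds @ drop (Suc ?i) ds)"
      using prod_list_upd(1)[OF di(1)] pr by simp
    also have "\<dots> = p * ((ds ! ?i div p) * prod_list (take ?i ds @ drop (Suc ?i) ds))"
      using di(2) by (metis dvd_div_mult_self mult.assoc mult.commute)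
    finally have "q = (ds ! ?i div p) * prod_list (take ?i ds @ drop (Suc ?i) ds)" using pp by simp
    then have "prod_list (ds[?i := ds ! ?i div p]) = q" using prod_list_upd(2)[OF di(1)] by simp
    then show "y \<in> {..<k} \<times> TS k q" using y pos2 len di(1) by (simp add: g_def TS_def)
  qed
  have "card (TS k (p*q)) \<le> card ({..<k} \<times> TS k q)"
    using card_inj_on_le[OF inj img] TS_finite[OF q] by simp
  then show ?thesis by (simp add: card_cartesian_product)
qed

lemma TS_one: "card (TS k 1) \<le> 1"
proof -
  have "TS k 1 \<subseteq> {replicate k 1}"
  proof
    fix ds assume "ds \<in> TS k 1"
    then have l: "length ds = k" and pr: "prod_list ds = 1" by (auto simp: TS_def)
    have "\<forall>x\<in>set ds. x = 1" using pr prod_list_dvd[of _ ds] by (metis nat_dvd_1_iff_1)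
    then have "ds = replicate k 1" using l by (metis replicate_eqI)
    then show "ds \<in> {replicate k 1}" by simp
  qed
  then have "card (TS k 1) \<le> card {replicate k (1::nat)}" by (intro card_mono) auto
  then show ?thesis by simp
qed

lemma tau_bound:
  fixes k :: nat
  shows "n \<ge> 1 \<Longrightarrow> \<exists>m. 2 ^ m \<le> n \<and> card (TS k n) \<le> k ^ m"
proof (induction n rule: less_induct)
  case (less n)
  show ?case
  proof (cases "n = 1")
    case True then show ?thesis using TS_one by (intro exI[of _ 0]) simp
  next
    case False
    then have "n \<noteq> 1" by simp
    then obtain p where p: "prime p" "p dvd n" using prime_factor_nat by blast
    then obtain q where nq: "n = p * q" by blast
    have q1: "q \<ge> 1" using nq less.prems by (cases q) auto
    have p2: "p \<ge> 2" using p(1) prime_ge_2_nat by blast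
    have "q < n" using nq p2 q1 by simp
    then obtain m where m: "2 ^ m \<le> q" "card (TS k q) \<le> k ^ m" using less.IH q1 by blast
    have "2 ^ Suc m \<le> n" using m(1) p2 nq by (simp add: mult_le_mono)
    moreover have "card (TS k n) \<le> k ^ Suc m"
      using tau_step[OF p(1) q1, of k] m(2) nq by (metis dual_order.trans mult_le_mono2 power_Suc)
    ultimately show ?thesis by blast
  qed
qed

lemma two_m: "2 * m \<le> (2::nat) ^ m"
proof (induction m)
  case 0 then show ?case by simp
next
  case (Suc m)
  then show ?case
    by (cases m) auto
qed

lemma TS_two: "card (TS k 2) \<ge> k"
proof -
  define h where "h i = (replicate k (1::nat))[i := 2]" for i
  have "inj_on h {..<k}"
  proof (rule inj_onI)
    fix i j assume i: "i \<in> {..<k}" and j: "j \<in> {..<k}" and e: "h i = h j"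
    have "h i ! i = 2" using i by (simp add: h_def)
    moreover have "h j ! i = (if i = j then 2 else 1)" using i by (simp add: h_def nth_list_update)
    ultimately show "i = j" using e by (auto split: if_splits)
  qed
  moreover have "h ` {..<k} \<subseteq> TS k 2"
  proof
    fix y assume "y \<in> h ` {..<k}"
    then obtain i where i: "i < k" "y = h i" by auto
    have "prod_list y = 2 * prod_list (take i (replicate k 1) @ drop (Suc i) (replicate k (1::nat)))"
      using prod_list_upd(2)[of i "replicate k (1::nat)" 2] i by (simp add: h_def)
    also have "\<dots> = 2" by simp
    finally have "prod_list y = 2" .
    moreover have "\<forall>d\<in>set y. d > 0"
    proof
      fix d assume "d \<in> set y"
      then obtain j where "j < length y" "d = y ! j" by (auto simp: in_set_conv_nth)
      then show "d > 0" using i by (simp add: h_def nth_list_update)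
    qed
    ultimately show "y \<in> TS k 2" using i by (simp add: TS_def h_def)
  qed
  ultimately have "card (h ` {..<k}) \<le> card (TS k 2)" using TS_finite[of 2 k] by (intro card_mono) auto
  then show ?thesis using card_image[OF \<open>inj_on h {..<k}\<close>] by simp
qed

theorem lemma3:
  fixes k :: nat
  assumes "k \<ge> 2"
  shows "(\<forall>n::nat. n \<ge> 1 \<longrightarrow> ln (real (tau k n)) / real n \<le> ln (real k) / 2)
       \<and> (\<exists>n::nat. n \<ge> 1 \<and> ln (real (tau k n)) / real n = ln (real k) / 2)"
proof
  have lk: "ln (real k) \<ge> 0" using assms by simp
  show "\<forall>n::nat. n \<ge> 1 \<longrightarrow> ln (real (tau k n)) / real n \<le> ln (real k) / 2"
  proof (intro allI impI)
    fix n :: nat assume n: "n \<ge> 1"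
    obtain m where m: "2 ^ m \<le> n" "tau k n \<le> k ^ m" using tau_bound[OF n, of k] tau_TS by auto
    have mn: "2 * real m \<le> real n" using two_m[of m] m(1) by linarith
    have "ln (real (tau k n)) \<le> real m * ln (real k)"
    proof (cases "tau k n = 0")
      case True then show ?thesis using lk by simp
    next
      case False
      have "real (tau k n) \<le> real k ^ m" using m(2) by (metis of_nat_le_iff of_nat_power)
      then have "ln (real (tau k n)) \<le> ln (real k ^ m)" using False assms by (subst ln_le_cancel_iff) auto
      also have "\<dots> = real m * ln (real k)" using assms by (simp add: ln_realpow)
      finally show ?thesis .
    qed
    also have "\<dots> \<le> (real n / 2) * ln (real k)" using mn lk by (intro mult_right_mono) auto
    finally show "ln (real (tau k n)) / real n \<le> ln (real k) / 2" using n by (simp add: divide_simps mult.commute)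
  qed
  have a: "k * card (TS k 1) \<le> k * 1" using TS_one[of k] by (intro mult_le_mono2)
  have b: "card (TS k (2 * 1)) \<le> k * card (TS k 1)" using tau_step[of 2 1 k] by simp
  have "card (TS k 2) \<le> k" using a b by (metis mult_1_right mult_numeral_1_right order_trans)
  then have "tau k 2 = k"
    using TS_two[of k] unfolding tau_TS by (rule le_antisym)
  then show "\<exists>n::nat. n \<ge> 1 \<and> ln (real (tau k n)) / real n = ln (real k) / 2"
    by (intro exI[of _ 2]) simp
qed

end
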